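(* For every $\ell\ge2$, $E_\ell\le\max\Big\{\frac1\ell\sum_{i=0}^{\ell-1}\log_\ell D_i : \{D_i\}_{i=0}^{\ell-1}\in\mathcal{V}^{(\ell)}_{LP}\Big\}$, where $\mathcal{V}^{(\ell)}_{LP}$ is the set of all $\ell$-dimensions LP-valid sequences.
   Context: A kernel of dimension $\ell$ is a bijection $g:\{0,1\}^\ell\to\{0,1\}^\ell$. ${\bf a}\bullet{\bf b}$ denotes concatenation, $d_H$ Hamming distance. Partial distances: $D_{min}^{(i)}=\min\{d_H(g({\bf w}\bullet 0\bullet{\bf u}),g({\bf w}\bullet 1\bullet {\bf v})) : {\bf w}\in\{0,1\}^i,\ {\bf u},{\bf v}\in\{0,1\}^{\ell-i-1}\}$; exponent $E(g)=\frac1\ell\sum_{i=0}^{\ell-1}\log_\ell D_{min}^{(i)}$; $E_\ell=\max_g E(g)$ over all kernels of dimension $\ell$. Let $d(n,k)$ be the largest possible minimum distance of a binary code of length $n$ with $2^k$ codewords, and $P_i(x)=\sum_{m=0}^{i}(-1)^m\binom{x}{m}\binom{\ell-x}{i-m}$. A sequence $\{D_i\}_{i=0}^{\ell-1}$ of non-negative integers, monotone non-decreasing with $D_i\le d(\ell,\ell-i)$, is an $\ell$-dimensions LP-valid sequence if there exist non-negative reals $\bar B_i^{(k)}$ ($k\in\{0,\dots,\ell-1\}$, $D_k\le i\le\ell$) with: (a) $\sum_{i=D_{\ell-r}}^{\ell}\bar B_i^{(\ell-r)}=2^r-1$ for $r\in\{1,\dots,\ell\}$; (b) $\bar B_i^{(\ell-r)}\ge\bar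 B_i^{(\ell-r+1)}$ for $r\in\{1,\dots,\ell-1\}$, $D_{\ell-r+1}\le i\le\ell$; (c) $\sum_{j=D_{\ell-r}}^{\ell}\bar B_j^{(\ell-r)}P_i(j)\ge-\binom{\ell}{i}$ for $i\in\{0,\dots,\ell\}$, $r\in\{1,\dots,\ell\}$. *)

theory Defs
  imports Complex_Main
begin

definition words :: "nat \<Rightarrow> bool list set" where
  "words n = {xs. length xs = n}"

definition hamming :: "bool list \<Rightarrow> bool list \<Rightarrow> nat" where
  "hamming x y = card {j. j < length x \<and> x ! j \<noteq> y ! j}"

definition is_kernel :: "nat \<Rightarrow> (bool list \<Rightarrow> bool list) \<Rightarrow> bool" where
  "is_kernel l g \<longleftrightarrow> bij_betw g (words l) (words l)"

definition partial_dist :: "nat \<Rightarrow> (bool list \<Rightarrow> bool list) \<Rightarrow> nat \<Rightarrow> nat" where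
  "partial_dist l g i = Min {hamming (g (w @ [False] @ u)) (g (w @ [True] @ v)) | w u v.
      w \<in> words i \<and> u \<in> words (l - i - 1) \<and> v \<in> words (l - i - 1)}"

definition kernel_exponent :: "nat \<Rightarrow> (bool list \<Rightarrow> bool list) \<Rightarrow> real" where
  "kernel_exponent l g = (1 / real l) * (\<Sum>i<l. log (real l) (real (partial_dist l g i)))"

definition E_max :: "nat \<Rightarrow> real" where
  "E_max l = Max {kernel_exponent l g | g. is_kernel l g}"

definition min_dist :: "bool list set \<Rightarrow> nat" where
  "min_dist C = Min {hamming x y | x y. x \<in> C \<and> y \<in> C \<and> x \<noteq> y}"

definition best_dist :: "nat \<Rightarrow> nat \<Rightarrow> nat" where
  "best_dist n k = Max {min_dist C | C. C \<subseteq> words n \<and> card C = 2 ^ k}"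

definition kraw :: "nat \<Rightarrow> nat \<Rightarrow> nat \<Rightarrow> real" where
  "kraw l i x = (\<Sum>m\<le>i. (-1) ^ m * real (x choose m) * real ((l - x) choose (i - m)))"

definition LP_valid :: "nat \<Rightarrow> (nat \<Rightarrow> nat) \<Rightarrow> bool" where
  "LP_valid l D \<longleftrightarrow>
     (\<forall>i j. i \<le> j \<and> j < l \<longrightarrow> D i \<le> D j) \<and>
     (\<forall>i<l. D i \<le> best_dist l (l - i)) \<and>
     (\<exists>B :: nat \<Rightarrow> nat \<Rightarrow> real.
        (\<forall>k<l. \<forall>i. D k \<le> i \<and> i \<le> l \<longrightarrow> 0 \<le> B k i) \<and>
        (\<forall>r\<in>{1..l}. (\<Sum>i=D (l - r)..l. B (l - r) i) = 2 ^ r - 1) \<and>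
        (\<forall>r\<in>{1..l-1}. \<forall>i. D (l - r + 1) \<le> i \<and> i \<le> l \<longrightarrow> B (l - r) i \<ge> B (l - r + 1) i) \<and>
        (\<forall>r\<in>{1..l}. \<forall>i\<le>l.
            (\<Sum>j=D (l - r)..l. B (l - r) j * kraw l i j) \<ge> - real (l choose i)))"

definition seq_value :: "nat \<Rightarrow> (nat \<Rightarrow> nat) \<Rightarrow> real" where
  "seq_value l D = (1 / real l) * (\<Sum>i<l. log (real l) (real (D i)))"

end

theory Submission
  imports Defs
begin

lemma words_finite: "finite (words n)"
proof -
  have "words n = {xs. set xs \<subseteq> (UNIV::bool set) \<and> length xs = n}" by (auto simp: words_def)
  thus ?thesis using finite_lists_length_eq[of "UNIV::bool set" n] by simp
qed

lemma card_words: "card (words n) = 2 ^ n"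
proof -
  have "words n = {xs. set xs \<subseteq> (UNIV::bool set) \<and> length xs = n}" by (auto simp: words_def)
  thus ?thesis using card_lists_length_eq[of "UNIV::bool set" n] by simp
qed

lemma hamming_sym: "length x = length y \<Longrightarrow> hamming x y = hamming y x"
  unfolding hamming_def by (metis (mono_tags, lifting))

lemma hamming_le: "hamming x y \<le> length x"
proof -
  have "{j. j < length x \<and> x ! j \<noteq> y ! j} \<subseteq> {..<length x}" by auto
  from card_mono[OF _ this] show ?thesis unfolding hamming_def by simp
qed

lemma hamming_pos: "length x = length y \<Longrightarrow> x \<noteq> y \<Longrightarrow> 0 < hamming x y"
proof -
  assume l: "length x = length y" and ne: "x \<noteq> y"
  then obtain j where "j < length x" "x ! j \<noteq> y ! j" using nth_equalityI by blast
  hence "{j. j < length x \<and> x ! j \<noteq> y ! j} \<noteq> {}" by auto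
  moreover have "finite {j. j < length x \<and> x ! j \<noteq> y ! j}" by auto
  ultimately show ?thesis unfolding hamming_def by (simp add: card_gt_0_iff)
qed

definition pre :: "nat \<Rightarrow> bool list \<Rightarrow> bool list set" where
  "pre n p = {x \<in> words n. take (length p) x = p}"

lemma card_pre: assumes "length p \<le> n" shows "card (pre n p) = 2 ^ (n - length p)"
proof -
  have "pre n p = (\<lambda>u. p @ u) ` words (n - length p)"
  proof
    show "pre n p \<subseteq> (\<lambda>u. p @ u) ` words (n - length p)"
    proof
      fix x assume "x \<in> pre n p"
      hence "x = p @ drop (length p) x" "drop (length p) x \<in> words (n - length p)"
        unfolding pre_def words_def by (auto, metis append_take_drop_id)
      thus "x \<in> (\<lambda>u. p @ u) ` words (n - length p)" by blast
    qed
    show "(\<lambda>u. p @ u) ` words (n - length p) \<subseteq> pre n p"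
      using assms unfolding pre_def words_def by auto
  qed
  moreover have "inj_on (\<lambda>u. p @ u) (words (n - length p))" by (auto simp: inj_on_def)
  ultimately show ?thesis by (simp add: card_image card_words)
qed

lemma finite_pre: "finite (pre n p)"
  unfolding pre_def using words_finite by auto

lemma card_split_subsets:
  assumes fN: "finite N" and DN: "\<Delta> \<subseteq> N" and mi: "m \<le> i"
  shows "card {S. S \<subseteq> N \<and> card S = i \<and> card (S \<inter> \<Delta>) = m}
        = (card \<Delta> choose m) * (card (N - \<Delta>) choose (i - m))"
proof -
  have fD: "finite \<Delta>" using finite_subset[OF DN fN] .
  let ?A = "{T. T \<subseteq> \<Delta> \<and> card T = m}" and ?B = "{R. R \<subseteq> N - \<Delta> \<and> card R = i - m}"
  have eq: "{S. S \<subseteq> N \<and> card S = i \<and> card (S \<inter> \<Delta>) = m} = (\<lambda>(T,R). T \<union> R) ` (?A \<times> ?B)"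
  proof
    show "{S. S \<subseteq> N \<and> card S = i \<and> card (S \<inter> \<Delta>) = m} \<subseteq> (\<lambda>(T,R). T \<union> R) ` (?A \<times> ?B)"
    proof
      fix S assume S: "S \<in> {S. S \<subseteq> N \<and> card S = i \<and> card (S \<inter> \<Delta>) = m}"
      have fS: "finite S" using S finite_subset[of S N] fN by auto
      have "card S = card (S \<inter> \<Delta>) + card (S - \<Delta>)"
      proof -
        have "S = (S \<inter> \<Delta>) \<union> (S - \<Delta>)" by blast
        hence "card S = card ((S \<inter> \<Delta>) \<union> (S - \<Delta>))" by simp
        also have "\<dots> = card (S \<inter> \<Delta>) + card (S - \<Delta>)"
          by (rule card_Un_disjoint) (use fS in auto)
        finally show ?thesis .
      qed
      hence "card (S - \<Delta>) = i - m" using S by auto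
      hence "(S \<inter> \<Delta>, S - \<Delta>) \<in> ?A \<times> ?B" using S by auto
      moreover have "S = (S \<inter> \<Delta>) \<union> (S - \<Delta>)" by auto
      ultimately show "S \<in> (\<lambda>(T,R). T \<union> R) ` (?A \<times> ?B)" by (metis (no_types, lifting) case_prod_conv image_eqI)
    qed
    show "(\<lambda>(T,R). T \<union> R) ` (?A \<times> ?B) \<subseteq> {S. S \<subseteq> N \<and> card S = i \<and> card (S \<inter> \<Delta>) = m}"
    proof
      fix S assume "S \<in> (\<lambda>(T,R). T \<union> R) ` (?A \<times> ?B)"
      then obtain T R where TR: "T \<in> ?A" "R \<in> ?B" "S = T \<union> R" by auto
      have fT: "finite T" using TR finite_subset[of T \<Delta>] fD by auto
      have fR: "finite R" using TR finite_subset[of R N] fN by auto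
      have dj: "T \<inter> R = {}" using TR by auto
      have "card S = m + (i - m)" using TR card_Un_disjoint[OF fT fR dj] by simp
      moreover have "S \<inter> \<Delta> = T" using TR by auto
      ultimately show "S \<in> {S. S \<subseteq> N \<and> card S = i \<and> card (S \<inter> \<Delta>) = m}"
        using TR DN mi by auto
    qed
  qed
  have inj: "inj_on (\<lambda>(T,R). T \<union> R) (?A \<times> ?B)"
  proof (rule inj_onI)
    fix p q assume hp: "p \<in> ?A \<times> ?B" and hq: "q \<in> ?A \<times> ?B"
      and e: "(\<lambda>(T,R). T \<union> R) p = (\<lambda>(T,R). T \<union> R) q"
    obtain T R where p: "p = (T,R)" by (cases p)
    obtain T' R' where q: "q = (T',R')" by (cases q)
    have h: "T \<in> ?A" "R \<in> ?B" "T' \<in> ?A" "R' \<in> ?B" using hp hq p q by auto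
    have e': "T \<union> R = T' \<union> R'" using e p q by simp
    have "T = (T \<union> R) \<inter> \<Delta>" "T' = (T' \<union> R') \<inter> \<Delta>" using h by auto
    moreover have "R = (T \<union> R) - \<Delta>" "R' = (T' \<union> R') - \<Delta>" using h by auto
    ultimately show "p = q" using e' p q by metis
  qed
  have "card (?A \<times> ?B) = card ?A * card ?B" by (rule card_cartesian_product)
  also have "\<dots> = (card \<Delta> choose m) * (card (N - \<Delta>) choose (i - m))"
    using n_subsets[OF fD] n_subsets[of "N - \<Delta>"] fN by simp
  finally show ?thesis using eq card_image[OF inj] by simp
qed

definition chi :: "nat set \<Rightarrow> bool list \<Rightarrow> real" where
  "chi S u = (-1) ^ card {j\<in>S. u ! j}"

lemma chi_mult:
  assumes fS: "finite S"
  shows "chi S u * chi S v = (-1) ^ card {j\<in>S. u ! j \<noteq> v ! j}"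
proof -
  let ?A1 = "{j\<in>S. u ! j \<and> v ! j}" and ?A2 = "{j\<in>S. u ! j \<and> \<not> v ! j}" and ?A3 = "{j\<in>S. \<not> u ! j \<and> v ! j}"
  have f: "finite ?A1" "finite ?A2" "finite ?A3" using fS by auto
  have "{j\<in>S. u ! j} = ?A1 \<union> ?A2" by auto
  hence c1: "card {j\<in>S. u ! j} = card ?A1 + card ?A2" using f by (simp add: card_Un_disjoint disjoint_iff)
  have "{j\<in>S. v ! j} = ?A1 \<union> ?A3" by auto
  hence c2: "card {j\<in>S. v ! j} = card ?A1 + card ?A3" using f by (simp add: card_Un_disjoint disjoint_iff)
  have "{j\<in>S. u ! j \<noteq> v ! j} = ?A2 \<union> ?A3" by auto
  hence c3: "card {j\<in>S. u ! j \<noteq> v ! j} = card ?A2 + card ?A3" using f by (simp add: card_Un_disjoint disjoint_iff)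
  have "chi S u * chi S v = (-1::real) ^ (2 * card ?A1) * (-1) ^ (card ?A2 + card ?A3)"
    unfolding chi_def c1 c2 by (simp add: power_add algebra_simps)
  also have "\<dots> = (-1) ^ (card ?A2 + card ?A3)" by (simp add: power_mult)
  finally show ?thesis using c3 by simp
qed

definition fam :: "nat \<Rightarrow> nat \<Rightarrow> nat set set" where
  "fam n i = {S. S \<subseteq> {..<n} \<and> card S = i}"

lemma finite_fam: "finite (fam n i)"
  unfolding fam_def by auto

lemma kraw_char:
  assumes u: "length u = n" and v: "length v = n"
  shows "kraw n i (hamming u v) = (\<Sum>S\<in>fam n i. chi S u * chi S v)"
proof -
  let ?D = "{j. j < n \<and> u ! j \<noteq> v ! j}"
  have hD: "hamming u v = card ?D" unfolding hamming_def using u by simp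
  have DN: "?D \<subseteq> {..<n}" by auto
  have cND: "card ({..<n} - ?D) = n - card ?D"
    using DN by (simp add: card_Diff_subset)
  have "(\<Sum>S\<in>fam n i. chi S u * chi S v) = (\<Sum>S\<in>fam n i. (-1::real) ^ card (S \<inter> ?D))"
  proof (rule sum.cong[OF refl])
    fix S assume "S \<in> fam n i"
    hence Sn: "S \<subseteq> {..<n}" and fS: "finite S" unfolding fam_def using finite_subset by auto
    have "{j\<in>S. u ! j \<noteq> v ! j} = S \<inter> ?D" using Sn by auto
    thus "chi S u * chi S v = (-1) ^ card (S \<inter> ?D)" using chi_mult[OF fS] by simp
  qed
  also have "\<dots> = (\<Sum>m\<le>i. (\<Sum>S\<in>{S\<in>fam n i. card (S \<inter> ?D) = m}. (-1::real) ^ card (S \<inter> ?D)))"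
  proof (rule sum.group[symmetric])
    show "finite (fam n i)" by (rule finite_fam)
    show "finite {..i}" by simp
    show "(\<lambda>S. card (S \<inter> ?D)) ` fam n i \<subseteq> {..i}"
    proof
      fix x assume "x \<in> (\<lambda>S. card (S \<inter> ?D)) ` fam n i"
      then obtain S where "S \<in> fam n i" "x = card (S \<inter> ?D)" by auto
      moreover have "card (S \<inter> ?D) \<le> card S" using \<open>S \<in> fam n i\<close> unfolding fam_def
        using card_mono[of S "S \<inter> ?D"] finite_subset[of S "{..<n}"] by auto
      ultimately show "x \<in> {..i}" unfolding fam_def by auto
    qed
  qed
  also have "\<dots> = (\<Sum>m\<le>i. (-1) ^ m * real (card {S\<in>fam n i. card (S \<inter> ?D) = m}))"
    by (rule sum.cong[OF refl]) simp
  also have "\<dots> = (\<Sum>m\<le>i. (-1) ^ m * real (card ?D choose m) * real ((n - card ?D) choose (i - m)))"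
  proof (rule sum.cong[OF refl])
    fix m assume "m \<in> {..i}"
    hence "card {S. S \<subseteq> {..<n} \<and> card S = i \<and> card (S \<inter> ?D) = m} = (card ?D choose m) * ((n - card ?D) choose (i - m))"
      using card_split_subsets[OF finite_lessThan DN, of m i] cND by simp
    moreover have "{S\<in>fam n i. card (S \<inter> ?D) = m} = {S. S \<subseteq> {..<n} \<and> card S = i \<and> card (S \<inter> ?D) = m}"
      unfolding fam_def by auto
    ultimately show "(-1) ^ m * real (card {S\<in>fam n i. card (S \<inter> ?D) = m}) = (-1) ^ m * real (card ?D choose m) * real ((n - card ?D) choose (i - m))"
      by simp
  qed
  finally show ?thesis unfolding kraw_def hD by simp
qed

lemma delsarte:
  assumes fA: "finite A" and h: "\<And>a. a \<in> A \<Longrightarrow> length (h a) = n"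
  shows "0 \<le> (\<Sum>a\<in>A. \<Sum>b\<in>A. kraw n i (hamming (h a) (h b)))"
proof -
  have "(\<Sum>a\<in>A. \<Sum>b\<in>A. kraw n i (hamming (h a) (h b)))
      = (\<Sum>a\<in>A. \<Sum>b\<in>A. \<Sum>S\<in>fam n i. chi S (h a) * chi S (h b))"
    using kraw_char h by simp
  also have "\<dots> = (\<Sum>S\<in>fam n i. \<Sum>a\<in>A. \<Sum>b\<in>A. chi S (h a) * chi S (h b))"
  proof -
    have "(\<Sum>a\<in>A. \<Sum>b\<in>A. \<Sum>S\<in>fam n i. chi S (h a) * chi S (h b))
        = (\<Sum>a\<in>A. \<Sum>S\<in>fam n i. \<Sum>b\<in>A. chi S (h a) * chi S (h b))"
      by (rule sum.cong[OF refl], rule sum.swap)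
    also have "\<dots> = (\<Sum>S\<in>fam n i. \<Sum>a\<in>A. \<Sum>b\<in>A. chi S (h a) * chi S (h b))"
      by (rule sum.swap)
    finally show ?thesis .
  qed
  also have "\<dots> = (\<Sum>S\<in>fam n i. (\<Sum>a\<in>A. chi S (h a)) * (\<Sum>b\<in>A. chi S (h b)))"
    by (simp add: sum_product)
  also have "\<dots> \<ge> 0" by (intro sum_nonneg) simp
  finally show ?thesis .
qed

definition PS :: "nat \<Rightarrow> (bool list \<Rightarrow> bool list) \<Rightarrow> nat \<Rightarrow> nat set" where
  "PS l g i = {hamming (g (w @ [False] @ u)) (g (w @ [True] @ v)) | w u v.
      w \<in> words i \<and> u \<in> words (l - i - 1) \<and> v \<in> words (l - i - 1)}"

lemma pd_PS: "partial_dist l g i = Min (PS l g i)"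
  unfolding partial_dist_def PS_def by simp

definition maps :: "nat \<Rightarrow> (bool list \<Rightarrow> bool list) \<Rightarrow> bool" where
  "maps l g \<longleftrightarrow> (\<forall>x\<in>words l. g x \<in> words l)"

lemma kernel_maps: "is_kernel l g \<Longrightarrow> maps l g"
  unfolding is_kernel_def maps_def bij_betw_def by auto

lemma kernel_inj: "is_kernel l g \<Longrightarrow> inj_on g (words l)"
  unfolding is_kernel_def bij_betw_def by auto

lemma PS_sub: assumes "maps l g" "i < l" shows "PS l g i \<subseteq> {..l}"
proof
  fix x assume "x \<in> PS l g i"
  then obtain w u v where "x = hamming (g (w @ [False] @ u)) (g (w @ [True] @ v))"
    "w \<in> words i" "u \<in> words (l - i - 1)" by (auto simp: PS_def)
  moreover have "w @ [False] @ u \<in> words l" using calculation assms by (auto simp: words_def)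
  ultimately show "x \<in> {..l}" using assms hamming_le unfolding maps_def words_def by (metis atMost_iff mem_Collect_eq)
qed

lemma PS_fin: assumes "maps l g" "i < l" shows "finite (PS l g i)"
  using PS_sub[OF assms] finite_subset by blast

lemma PS_ne: assumes "i < l" shows "PS l g i \<noteq> {}"
proof -
  have "hamming (g (replicate i False @ [False] @ replicate (l-i-1) False)) (g (replicate i False @ [True] @ replicate (l-i-1) False)) \<in> PS l g i"
    unfolding PS_def words_def
    apply (rule CollectI)
    apply (rule exI[of _ "replicate i False"], rule exI[of _ "replicate (l-i-1) False"], rule exI[of _ "replicate (l-i-1) False"])
    by simp
  thus ?thesis by blast
qed

lemma pd_le_l: assumes "maps l g" "i < l" shows "partial_dist l g i \<le> l"
  using PS_sub[OF assms] Min_in[OF PS_fin[OF assms] PS_ne[OF assms(2)]] unfolding pd_PS by auto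

lemma pd_pos: assumes k: "is_kernel l g" and i: "i < l" shows "0 < partial_dist l g i"
proof -
  have m: "maps l g" using kernel_maps[OF k] .
  have "\<forall>x\<in>PS l g i. 0 < x"
  proof
    fix x assume "x \<in> PS l g i"
    then obtain w u v where x: "x = hamming (g (w @ [False] @ u)) (g (w @ [True] @ v))"
      and h: "w \<in> words i" "u \<in> words (l - i - 1)" "v \<in> words (l - i - 1)" by (auto simp: PS_def)
    have a: "w @ [False] @ u \<in> words l" "w @ [True] @ v \<in> words l" using h i by (auto simp: words_def)
    have "w @ [False] @ u \<noteq> w @ [True] @ v" by simp
    hence "g (w @ [False] @ u) \<noteq> g (w @ [True] @ v)" using kernel_inj[OF k] a by (meson inj_on_def)
    moreover have "length (g (w @ [False] @ u)) = length (g (w @ [True] @ v))"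
      using m a unfolding maps_def words_def by auto
    ultimately show "0 < x" using x hamming_pos by auto
  qed
  thus ?thesis unfolding pd_PS using Min_in[OF PS_fin[OF m i] PS_ne[OF i]] by blast
qed

lemma pd_le_FT:
  assumes m: "maps l g" and j: "j < l" and a: "a \<in> words l" and b: "b \<in> words l"
    and ag: "\<forall>k<j. a ! k = b ! k" and aj: "\<not> a ! j" and bj: "b ! j"
  shows "partial_dist l g j \<le> hamming (g a) (g b)"
proof -
  have la: "length a = l" and lb: "length b = l" using a b by (auto simp: words_def)
  have tk: "take j a = take j b" using ag la lb j by (intro nth_equalityI) auto
  have ea: "a = take j a @ [False] @ drop (Suc j) a" using id_take_nth_drop[of j a] la j aj by simp
  have eb: "b = take j a @ [True] @ drop (Suc j) b" using id_take_nth_drop[of j b] lb j bj tk by simp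
  have "hamming (g a) (g b) \<in> PS l g j"
    unfolding PS_def words_def
    apply (rule CollectI)
    apply (rule exI[of _ "take j a"], rule exI[of _ "drop (Suc j) a"], rule exI[of _ "drop (Suc j) b"])
    apply (rule conjI)
    using arg_cong2[OF ea eb, of "\<lambda>x y. hamming (g x) (g y)"] apply simp
    using la lb j by simp
  thus ?thesis unfolding pd_PS using Min_le[OF PS_fin[OF m j]] by blast
qed

lemma pd_le_ne:
  assumes m: "maps l g" and j: "j < l" and a: "a \<in> words l" and b: "b \<in> words l"
    and ag: "\<forall>k<j. a ! k = b ! k" and aj: "a ! j \<noteq> b ! j"
  shows "partial_dist l g j \<le> hamming (g a) (g b)"
proof (cases "a ! j")
  case True
  hence "partial_dist l g j \<le> hamming (g b) (g a)" using pd_le_FT[OF m j b a] ag aj by auto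
  moreover have "length (g a) = length (g b)" using m a b by (auto simp: maps_def words_def)
  ultimately show ?thesis using hamming_sym by metis
next
  case False
  thus ?thesis using pd_le_FT[OF m j a b] ag aj by auto
qed

lemma first_diff:
  assumes a: "a \<in> words l" and b: "b \<in> words l" and ag: "\<forall>m<k. a ! m = b ! m" and ne: "a \<noteq> b"
  shows "\<exists>j. k \<le> j \<and> j < l \<and> (\<forall>m<j. a ! m = b ! m) \<and> a ! j \<noteq> b ! j"
proof -
  have la: "length a = l" and lb: "length b = l" using a b by (auto simp: words_def)
  have ex: "\<exists>m. m < l \<and> a ! m \<noteq> b ! m"
  proof (rule ccontr)
    assume "\<not> (\<exists>m. m < l \<and> a ! m \<noteq> b ! m)"
    hence "a = b" using la lb by (intro nth_equalityI) auto
    thus False using ne by simp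
  qed
  define j where "j = (LEAST m. m < l \<and> a ! m \<noteq> b ! m)"
  have j1: "j < l \<and> a ! j \<noteq> b ! j" unfolding j_def using LeastI_ex[OF ex] .
  have j2: "\<forall>m<j. a ! m = b ! m"
  proof (intro allI impI)
    fix m assume "m < j"
    hence "\<not> (m < l \<and> a ! m \<noteq> b ! m)" unfolding j_def using not_less_Least by blast
    thus "a ! m = b ! m" using \<open>m < j\<close> j1 by auto
  qed
  have "k \<le> j" using ag j1 by (meson not_le)
  thus ?thesis using j1 j2 by blast
qed

definition monoD :: "nat \<Rightarrow> (nat \<Rightarrow> nat) \<Rightarrow> bool" where
  "monoD l D \<longleftrightarrow> (\<forall>i j. i \<le> j \<and> j < l \<longrightarrow> D i \<le> D j)"

lemma pd_le_prefix:
  assumes m: "maps l g" and mo: "monoD l (partial_dist l g)" and k: "k < l"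
    and a: "a \<in> words l" and b: "b \<in> words l" and ag: "\<forall>m<k. a ! m = b ! m" and ne: "a \<noteq> b"
  shows "partial_dist l g k \<le> hamming (g a) (g b)"
proof -
  obtain j where j: "k \<le> j" "j < l" "\<forall>m<j. a ! m = b ! m" "a ! j \<noteq> b ! j"
    using first_diff[OF a b ag ne] by blast
  have "partial_dist l g k \<le> partial_dist l g j" using mo j unfolding monoD_def by blast
  also have "\<dots> \<le> hamming (g a) (g b)" using pd_le_ne[OF m j(2) a b j(3) j(4)] .
  finally show ?thesis .
qed

definition sig :: "nat \<Rightarrow> nat \<Rightarrow> nat" where
  "sig i m = (if m = i then Suc i else if m = Suc i then i else m)"

definition sw :: "nat \<Rightarrow> bool list \<Rightarrow> bool list" where
  "sw i x = (if Suc i < length x then map (\<lambda>m. x ! sig i m) [0..<length x] else x)"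

lemma sig_lt: "Suc i < n \<Longrightarrow> m < n \<Longrightarrow> sig i m < n"
  unfolding sig_def by auto

lemma sig_sig: "sig i (sig i m) = m"
  unfolding sig_def by auto

lemma length_sw[simp]: "length (sw i x) = length x"
  unfolding sw_def by auto

lemma nth_sw: "Suc i < length x \<Longrightarrow> m < length x \<Longrightarrow> sw i x ! m = x ! sig i m"
  unfolding sw_def by auto

lemma sw_sw[simp]: "sw i (sw i x) = x"
proof (cases "Suc i < length x")
  case True
  show ?thesis
  proof (rule nth_equalityI)
    show "length (sw i (sw i x)) = length x" by simp
    fix m assume "m < length (sw i (sw i x))"
    hence m: "m < length x" by simp
    have "sw i (sw i x) ! m = sw i x ! sig i m" using nth_sw[of i "sw i x" m] True m by simp
    also have "\<dots> = x ! m" using nth_sw[OF True sig_lt[OF True m]] sig_sig by simp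
    finally show "sw i (sw i x) ! m = x ! m" .
  qed
next
  case False thus ?thesis unfolding sw_def by simp
qed

lemma sw_words: "x \<in> words l \<Longrightarrow> sw i x \<in> words l"
  unfolding words_def by simp

lemma kernel_sw: assumes "is_kernel l g" shows "is_kernel l (g \<circ> sw i)"
proof -
  have "bij_betw (sw i) (words l) (words l)"
    by (rule bij_betw_byWitness[where f'="sw i"]) (auto simp: sw_words)
  thus ?thesis using assms unfolding is_kernel_def using bij_betw_trans by blast
qed

lemma maps_sw: "maps l g \<Longrightarrow> maps l (g \<circ> sw i)"
  unfolding maps_def using sw_words by auto

lemma PS_elem:
  assumes "z \<in> PS l h j" "j < l"
  shows "\<exists>x y. x \<in> words l \<and> y \<in> words l \<and> (\<forall>m<j. x ! m = y ! m) \<and> \<not> x ! j \<and> y ! j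
     \<and> z = hamming (h x) (h y)"
proof -
  obtain w u v where z: "z = hamming (h (w @ [False] @ u)) (h (w @ [True] @ v))"
    and h: "w \<in> words j" "u \<in> words (l - j - 1)" "v \<in> words (l - j - 1)"
    using assms(1) by (auto simp: PS_def)
  have lw: "length w = j" using h by (simp add: words_def)
  have "w @ [False] @ u \<in> words l" "w @ [True] @ v \<in> words l" using h assms(2) by (auto simp: words_def)
  moreover have "\<forall>m<j. (w @ [False] @ u) ! m = (w @ [True] @ v) ! m" using lw by (auto simp: nth_append)
  moreover have "\<not> (w @ [False] @ u) ! j" "(w @ [True] @ v) ! j" using lw by auto
  ultimately show ?thesis using z by blast
qed

lemma pd_ge:
  assumes m: "maps l h" and j: "j < l" and H: "\<And>x y. x \<in> words l \<Longrightarrow> y \<in> words l \<Longrightarrow> (\<forall>m<j. x ! m = y ! m)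
      \<Longrightarrow> \<not> x ! j \<Longrightarrow> y ! j \<Longrightarrow> c \<le> hamming (h x) (h y)"
  shows "c \<le> partial_dist l h j"
  unfolding pd_PS Min_ge_iff[OF PS_fin[OF m j] PS_ne[OF j]]
  using PS_elem[OF _ j] H by blast

lemma swap_other:
  assumes m: "maps l g" and i: "Suc i < l" and j: "j < l" "j \<noteq> i" "j \<noteq> Suc i"
  shows "partial_dist l g j \<le> partial_dist l (g \<circ> sw i) j"
proof (rule pd_ge[OF maps_sw[OF m] j(1)])
  fix x y assume x: "x \<in> words l" and y: "y \<in> words l" and ag: "\<forall>m<j. x ! m = y ! m"
    and xj: "\<not> x ! j" and yj: "y ! j"
  have lx: "length x = l" and ly: "length y = l" using x y by (auto simp: words_def)
  have ag': "\<forall>m<j. sw i x ! m = sw i y ! m"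
  proof (intro allI impI)
    fix m assume "m < j"
    hence "sig i m < j" using j unfolding sig_def by auto
    thus "sw i x ! m = sw i y ! m" using nth_sw lx ly i j \<open>m < j\<close> ag by auto
  qed
  have "sw i x ! j = x ! j" "sw i y ! j = y ! j" using nth_sw lx ly i j unfolding sig_def by auto
  hence "sw i x ! j \<noteq> sw i y ! j" using xj yj by auto
  from pd_le_ne[OF m j(1) sw_words[OF x] sw_words[OF y] ag' this]
  show "partial_dist l g j \<le> hamming ((g \<circ> sw i) x) ((g \<circ> sw i) y)" by simp
qed

lemma swap_i:
  assumes m: "maps l g" and i: "Suc i < l"
  shows "min (partial_dist l g i) (partial_dist l g (Suc i)) \<le> partial_dist l (g \<circ> sw i) i"
proof (rule pd_ge[OF maps_sw[OF m]])
  show "i < l" using i by simp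
  fix x y assume x: "x \<in> words l" and y: "y \<in> words l" and ag: "\<forall>m<i. x ! m = y ! m"
    and xj: "\<not> x ! i" and yj: "y ! i"
  have lx: "length x = l" and ly: "length y = l" using x y by (auto simp: words_def)
  have ag': "\<forall>m<i. sw i x ! m = sw i y ! m"
    using nth_sw lx ly i ag unfolding sig_def by auto
  show "min (partial_dist l g i) (partial_dist l g (Suc i)) \<le> hamming ((g \<circ> sw i) x) ((g \<circ> sw i) y)"
  proof (cases "sw i x ! i = sw i y ! i")
    case False
    from pd_le_ne[OF m _ sw_words[OF x] sw_words[OF y] ag' False] i show ?thesis by simp
  next
    case True
    have ag2: "\<forall>m<Suc i. sw i x ! m = sw i y ! m" using ag' True less_Suc_eq by auto
    have "sw i x ! Suc i = x ! i" "sw i y ! Suc i = y ! i" using nth_sw lx ly i unfolding sig_def by auto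
    hence "sw i x ! Suc i \<noteq> sw i y ! Suc i" using xj yj by auto
    from pd_le_ne[OF m i sw_words[OF x] sw_words[OF y] ag2 this] show ?thesis by simp
  qed
qed

lemma swap_Suc_i:
  assumes m: "maps l g" and i: "Suc i < l"
  shows "partial_dist l g i \<le> partial_dist l (g \<circ> sw i) (Suc i)"
proof (rule pd_ge[OF maps_sw[OF m] i])
  fix x y assume x: "x \<in> words l" and y: "y \<in> words l" and ag: "\<forall>m<Suc i. x ! m = y ! m"
    and xj: "\<not> x ! Suc i" and yj: "y ! Suc i"
  have lx: "length x = l" and ly: "length y = l" using x y by (auto simp: words_def)
  have ag': "\<forall>m<i. sw i x ! m = sw i y ! m"
    using nth_sw lx ly i ag unfolding sig_def by auto
  have "sw i x ! i = x ! Suc i" "sw i y ! i = y ! Suc i" using nth_sw lx ly i unfolding sig_def by auto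
  hence "sw i x ! i \<noteq> sw i y ! i" using xj yj by auto
  from pd_le_ne[OF m _ sw_words[OF x] sw_words[OF y] ag' this] i
  show "partial_dist l g i \<le> hamming ((g \<circ> sw i) x) ((g \<circ> sw i) y)" by simp
qed

definition Pi_pd :: "nat \<Rightarrow> (bool list \<Rightarrow> bool list) \<Rightarrow> nat" where
  "Pi_pd l g = (\<Prod>j<l. partial_dist l g j)"

definition Sg_pd :: "nat \<Rightarrow> (bool list \<Rightarrow> bool list) \<Rightarrow> nat" where
  "Sg_pd l g = (\<Sum>j<l. j * partial_dist l g j)"

definition Psi :: "nat \<Rightarrow> (bool list \<Rightarrow> bool list) \<Rightarrow> nat" where
  "Psi l g = (l*l*l + 1) * Pi_pd l g + Sg_pd l g"

lemma Sg_bound: assumes "maps l g" shows "Sg_pd l g \<le> l*l*l"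
proof -
  have "Sg_pd l g \<le> (\<Sum>j<l. l * l)"
    unfolding Sg_pd_def
  proof (rule sum_mono)
    fix j assume "j \<in> {..<l}"
    hence "j \<le> l" "partial_dist l g j \<le> l" using pd_le_l[OF assms] by auto
    thus "j * partial_dist l g j \<le> l * l" by (simp add: mult_le_mono)
  qed
  also have "\<dots> = l*l*l" by simp
  finally show ?thesis .
qed

lemma Pi_bound: assumes "maps l g" shows "Pi_pd l g \<le> l ^ l"
proof -
  have "Pi_pd l g \<le> (\<Prod>j<l. l)"
    unfolding Pi_pd_def by (rule prod_mono) (use pd_le_l[OF assms] in auto)
  thus ?thesis by simp
qed

lemma kernel_id: "is_kernel l id"
  unfolding is_kernel_def by simp

lemma best_exists: "\<exists>g. is_kernel l g \<and> (\<forall>h. is_kernel l h \<longrightarrow> Psi l h \<le> Psi l g)"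
proof -
  let ?P = "\<lambda>y. \<exists>g. is_kernel l g \<and> Psi l g = y"
  have p0: "?P (Psi l id)" using kernel_id by blast
  have bnd: "\<forall>y. ?P y \<longrightarrow> y \<le> (l*l*l+1) * l ^ l + l*l*l"
  proof (intro allI impI)
    fix y assume "?P y"
    then obtain g where g: "is_kernel l g" "Psi l g = y" by blast
    have m: "maps l g" using kernel_maps[OF g(1)] .
    show "y \<le> (l*l*l+1) * l ^ l + l*l*l"
      unfolding g(2)[symmetric] Psi_def by (intro add_mono mult_le_mono2 Pi_bound[OF m] Sg_bound[OF m])
  qed
  obtain y where y1: "?P y" and y2: "\<forall>z. ?P z \<longrightarrow> z \<le> y"
    using Nat.ex_has_greatest_nat[of ?P, OF p0 bnd] by (elim exE conjE) blast
  from y1 obtain g where g: "is_kernel l g" "Psi l g = y" by (elim exE conjE)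
  have "\<forall>h. is_kernel l h \<longrightarrow> Psi l h \<le> Psi l g"
  proof (intro allI impI)
    fix h assume "is_kernel l h"
    hence "?P (Psi l h)" by blast
    thus "Psi l h \<le> Psi l g" using y2 g(2) by simp
  qed
  thus ?thesis using g(1) by blast
qed

lemma split2:
  fixes f :: "nat \<Rightarrow> 'a::comm_monoid_mult"
  assumes "Suc i < l"
  shows "(\<Prod>j<l. f j) = f i * f (Suc i) * (\<Prod>j\<in>{..<l} - {i, Suc i}. f j)"
proof -
  have e: "{..<l} = insert i (insert (Suc i) ({..<l} - {i, Suc i}))" using assms by auto
  have "(\<Prod>j<l. f j) = (\<Prod>j\<in>insert i (insert (Suc i) ({..<l} - {i, Suc i})). f j)"
    by (rule arg_cong[where f="prod f", OF e])
  also have "\<dots> = f i * f (Suc i) * (\<Prod>j\<in>{..<l} - {i, Suc i}. f j)"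
    by (simp add: mult.assoc)
  finally show ?thesis .
qed

lemma split2s:
  fixes f :: "nat \<Rightarrow> 'a::comm_monoid_add"
  assumes "Suc i < l"
  shows "(\<Sum>j<l. f j) = f i + f (Suc i) + (\<Sum>j\<in>{..<l} - {i, Suc i}. f j)"
proof -
  have e: "{..<l} = insert i (insert (Suc i) ({..<l} - {i, Suc i}))" using assms by auto
  have "(\<Sum>j<l. f j) = (\<Sum>j\<in>insert i (insert (Suc i) ({..<l} - {i, Suc i})). f j)"
    by (rule arg_cong[where f="sum f", OF e])
  also have "\<dots> = f i + f (Suc i) + (\<Sum>j\<in>{..<l} - {i, Suc i}. f j)"
    by (simp add: add.assoc)
  finally show ?thesis .
qed

lemma nat_prod_eq:
  fixes a b c d :: nat
  assumes "c \<le> a" "d \<le> b" "0 < c" "0 < d" "a * b \<le> c * d"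
  shows "a = c \<and> b = d"
proof -
  have "c * d \<le> a * d" using assms by simp
  moreover have "a * d \<le> a * b" using assms by simp
  ultimately have e1: "a * b = a * d" "a * d = c * d" using assms by linarith+
  have "0 < a" using assms by simp
  thus ?thesis using e1 assms by auto
qed

lemma adj_mono:
  assumes "\<forall>i. Suc i < l \<longrightarrow> D i \<le> D (Suc i)"
  shows "monoD l D"
  unfolding monoD_def
proof (intro allI impI, elim conjE)
  fix i j assume "i \<le> j" "j < l"
  thus "D i \<le> D j"
  proof (induction j rule: dec_induct)
    case base thus ?case by simp
  next
    case (step n)
    have l1: "Suc n < l" using step.prems by simp
    hence "D i \<le> D n" using step.IH by simp
    moreover have "D n \<le> D (Suc n)" using assms l1 by blast
    ultimately show ?case by simp
  qed
qed

lemma best_adj: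
  assumes g: "is_kernel l g" and best: "\<forall>h. is_kernel l h \<longrightarrow> Psi l h \<le> Psi l g"
    and i: "Suc i < l"
  shows "partial_dist l g i \<le> partial_dist l g (Suc i)"
proof (rule ccontr)
  assume "\<not> ?thesis"
  hence lt: "partial_dist l g (Suc i) < partial_dist l g i" by simp
  define g' where "g' = g \<circ> sw i"
  have g': "is_kernel l g'" unfolding g'_def using kernel_sw[OF g] .
  have m: "maps l g" and m': "maps l g'" using kernel_maps g g' by auto
  have gg: "g' \<circ> sw i = g" unfolding g'_def by (rule ext) simp
  let ?D = "partial_dist l g" and ?D' = "partial_dist l g'"
  have oth: "\<forall>j\<in>{..<l} - {i, Suc i}. ?D' j = ?D j"
  proof
    fix j assume "j \<in> {..<l} - {i, Suc i}"
    hence j: "j < l" "j \<noteq> i" "j \<noteq> Suc i" by auto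
    have "?D j \<le> ?D' j" using swap_other[OF m i j] unfolding g'_def .
    moreover have "?D' j \<le> partial_dist l (g' \<circ> sw i) j" using swap_other[OF m' i j] .
    ultimately show "?D' j = ?D j" using gg by simp
  qed
  have a: "?D (Suc i) \<le> ?D' i" using swap_i[OF m i] lt unfolding g'_def by simp
  have b: "?D i \<le> ?D' (Suc i)" using swap_Suc_i[OF m i] unfolding g'_def .
  have pos: "0 < ?D (Suc i)" "0 < ?D i" using pd_pos[OF g] i by auto
  define R where "R = (\<Prod>j\<in>{..<l} - {i, Suc i}. ?D j)"
  have Rpos: "0 < R" unfolding R_def using pd_pos[OF g] by (intro prod_pos) auto
  have P: "Pi_pd l g = ?D i * ?D (Suc i) * R" unfolding Pi_pd_def R_def using split2[OF i] .
  have P': "Pi_pd l g' = ?D' i * ?D' (Suc i) * R" unfolding Pi_pd_def R_def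
    using split2[OF i, of ?D'] prod.cong[OF refl, of "{..<l} - {i, Suc i}" ?D' ?D] oth by simp
  have Sb: "Sg_pd l g \<le> l*l*l" using Sg_bound[OF m] .
  show False
  proof (cases "?D' i * ?D' (Suc i) \<le> ?D (Suc i) * ?D i")
    case True
    from nat_prod_eq[OF a b pos True] have e: "?D' i = ?D (Suc i)" "?D' (Suc i) = ?D i" by auto
    hence PP: "Pi_pd l g' = Pi_pd l g" using P P' by simp
    define T where "T = (\<Sum>j\<in>{..<l} - {i, Suc i}. j * ?D j)"
    have S: "Sg_pd l g = i * ?D i + Suc i * ?D (Suc i) + T" unfolding Sg_pd_def T_def using split2s[OF i] .
    have S': "Sg_pd l g' = i * ?D (Suc i) + Suc i * ?D i + T" unfolding Sg_pd_def T_def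
      using split2s[OF i, of "\<lambda>j. j * ?D' j"] sum.cong[OF refl, of "{..<l} - {i, Suc i}" "\<lambda>j. j * ?D' j" "\<lambda>j. j * ?D j"] oth e by simp
    have "Sg_pd l g < Sg_pd l g'" unfolding S S' using lt by simp
    hence "Psi l g < Psi l g'" unfolding Psi_def PP by simp
    thus False using best g' by (meson not_le)
  next
    case False
    hence "?D (Suc i) * ?D i + 1 \<le> ?D' i * ?D' (Suc i)" by simp
    hence "(?D (Suc i) * ?D i + 1) * R \<le> ?D' i * ?D' (Suc i) * R" by (rule mult_right_mono) simp
    moreover have "Pi_pd l g + 1 \<le> (?D (Suc i) * ?D i + 1) * R"
    proof -
      have "Pi_pd l g + 1 \<le> ?D (Suc i) * ?D i * R + R" using P Rpos by (simp add: mult.commute)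
      also have "\<dots> = (?D (Suc i) * ?D i + 1) * R" by (simp add: distrib_right)
      finally show ?thesis .
    qed
    ultimately have "Pi_pd l g + 1 \<le> Pi_pd l g'" using P' by simp
    hence "(l*l*l+1) * (Pi_pd l g + 1) \<le> (l*l*l+1) * Pi_pd l g'" by (rule mult_left_mono) simp
    hence "Psi l g < Psi l g'" unfolding Psi_def using Sb by (simp add: algebra_simps)
    thus False using best g' by (meson not_le)
  qed
qed

definition Qk :: "nat \<Rightarrow> nat \<Rightarrow> (bool list \<times> bool list) set" where
  "Qk l k = {p. fst p \<in> words l \<and> snd p \<in> words l \<and> take k (snd p) = take k (fst p)}"

lemma Qk_Sigma: "k \<le> l \<Longrightarrow> Qk l k = Sigma (words l) (\<lambda>x. pre l (take k x))"
  unfolding Qk_def pre_def words_def by (auto simp: min_def split: if_splits)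

definition Pk :: "nat \<Rightarrow> nat \<Rightarrow> (bool list \<times> bool list) set" where
  "Pk l k = {p \<in> Qk l k. fst p \<noteq> snd p}"

definition diag :: "nat \<Rightarrow> (bool list \<times> bool list) set" where
  "diag l = (\<lambda>x. (x,x)) ` words l"

lemma finite_Qk: "finite (Qk l k)"
proof -
  have "Qk l k \<subseteq> words l \<times> words l" unfolding Qk_def by auto
  thus ?thesis using words_finite finite_subset by blast
qed

lemma finite_Pk: "finite (Pk l k)"
  unfolding Pk_def using finite_Qk by auto

lemma card_Qk: assumes "k \<le> l" shows "card (Qk l k) = 2 ^ l * 2 ^ (l - k)"
proof -
  have "card (Qk l k) = (\<Sum>x\<in>words l. card (pre l (take k x)))"
    unfolding Qk_Sigma[OF assms] using words_finite finite_pre by (simp add: card_SigmaI)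
  also have "\<dots> = (\<Sum>x\<in>words l. 2 ^ (l - k))"
  proof (rule sum.cong[OF refl])
    fix x assume "x \<in> words l"
    hence "length (take k x) = k" using assms by (simp add: words_def)
    thus "card (pre l (take k x)) = 2 ^ (l - k)" using card_pre[of "take k x" l] assms by simp
  qed
  also have "\<dots> = 2 ^ l * 2 ^ (l - k)" by (simp add: card_words)
  finally show ?thesis .
qed

lemma diag_sub: "diag l \<subseteq> Qk l k"
  unfolding diag_def Qk_def by auto

lemma card_diag: "card (diag l) = 2 ^ l"
  unfolding diag_def by (subst card_image) (auto simp: inj_on_def card_words)

lemma Pk_eq: "Pk l k = Qk l k - diag l"
  unfolding Pk_def diag_def Qk_def by auto

lemma card_Pk: assumes "k \<le> l" shows "card (Pk l k) = 2 ^ l * 2 ^ (l - k) - 2 ^ l"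
proof -
  have "finite (diag l)" using finite_subset[OF diag_sub finite_Qk] .
  from card_Diff_subset[OF this diag_sub, of k] show ?thesis unfolding Pk_eq card_Qk[OF assms] card_diag by simp
qed

lemma Pk_mono: "Pk l (Suc k) \<subseteq> Pk l k"
proof
  fix p assume "p \<in> Pk l (Suc k)"
  then obtain x y where p: "p = (x,y)" "x \<in> words l" "y \<in> words l" "take (Suc k) y = take (Suc k) x" "x \<noteq> y"
    unfolding Pk_def Qk_def by (cases p) auto
  have "take k y = take k x" using arg_cong[OF p(4), of "take k"] by (simp add: min_def)
  thus "p \<in> Pk l k" using p unfolding Pk_def Qk_def by auto
qed

lemma Pk_ham:
  assumes k: "is_kernel l g" and mo: "monoD l (partial_dist l g)" and kl: "k < l" and p: "p \<in> Pk l k"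
  shows "partial_dist l g k \<le> hamming (g (fst p)) (g (snd p)) \<and> hamming (g (fst p)) (g (snd p)) \<le> l"
proof -
  obtain x y where xy: "p = (x,y)" "x \<in> words l" "y \<in> words l" "take k y = take k x" "x \<noteq> y"
    using p unfolding Pk_def Qk_def by (cases p) auto
  have "\<forall>m<k. x ! m = y ! m"
  proof (intro allI impI)
    fix m assume "m < k"
    hence "take k x ! m = x ! m" "take k y ! m = y ! m" by simp_all
    thus "x ! m = y ! m" using xy(4) by simp
  qed
  hence "partial_dist l g k \<le> hamming (g x) (g y)"
    using pd_le_prefix[OF kernel_maps[OF k] mo kl xy(2) xy(3)] xy(5) by simp
  moreover have "hamming (g x) (g y) \<le> l" using hamming_le kernel_maps[OF k] xy(2)
    unfolding maps_def words_def by (metis mem_Collect_eq)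
  ultimately show ?thesis using xy by simp
qed

definition Bk :: "nat \<Rightarrow> (bool list \<Rightarrow> bool list) \<Rightarrow> nat \<Rightarrow> nat \<Rightarrow> real" where
  "Bk l g k j = real (card {p \<in> Pk l k. hamming (g (fst p)) (g (snd p)) = j}) / 2 ^ l"

lemma group_Pk:
  fixes F :: "nat \<Rightarrow> real"
  assumes k: "is_kernel l g" and mo: "monoD l (partial_dist l g)" and kl: "k < l"
  shows "(\<Sum>j=partial_dist l g k..l. Bk l g k j * F j) = (\<Sum>p\<in>Pk l k. F (hamming (g (fst p)) (g (snd p)))) / 2 ^ l"
proof -
  let ?h = "\<lambda>p. hamming (g (fst p)) (g (snd p))"
  have "(\<Sum>p\<in>Pk l k. F (?h p)) = (\<Sum>j=partial_dist l g k..l. \<Sum>p\<in>{p\<in>Pk l k. ?h p = j}. F (?h p))"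
    by (rule sum.group[symmetric]) (use finite_Pk Pk_ham[OF k mo kl] in auto)
  also have "\<dots> = (\<Sum>j=partial_dist l g k..l. real (card {p\<in>Pk l k. ?h p = j}) * F j)"
    by (rule sum.cong[OF refl]) simp
  finally show ?thesis unfolding Bk_def by (simp add: sum_divide_distrib)
qed

lemma kraw0: "kraw l i 0 = real (l choose i)"
proof -
  have "kraw l i 0 = (\<Sum>m\<le>i. (if m = 0 then real (l choose i) else 0))"
    unfolding kraw_def by (rule sum.cong[OF refl]) auto
  thus ?thesis by simp
qed

lemma hamming_self: "hamming x x = 0"
  unfolding hamming_def by simp

lemma Qk_nonneg:
  assumes k: "is_kernel l g" and kl: "k \<le> l"
  shows "0 \<le> (\<Sum>p\<in>Qk l k. kraw l i (hamming (g (fst p)) (g (snd p))))"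
proof -
  let ?F = "\<lambda>x y. kraw l i (hamming (g x) (g y))"
  have "(\<Sum>p\<in>Qk l k. kraw l i (hamming (g (fst p)) (g (snd p)))) = (\<Sum>x\<in>words l. \<Sum>y\<in>pre l (take k x). ?F x y)"
  proof -
    have e: "(\<lambda>p. kraw l i (hamming (g (fst p)) (g (snd p)))) = (\<lambda>(x,y). ?F x y)"
      by (simp add: case_prod_unfold)
    have "(\<Sum>x\<in>words l. \<Sum>y\<in>pre l (take k x). ?F x y) = (\<Sum>(x,y)\<in>Sigma (words l) (\<lambda>x. pre l (take k x)). ?F x y)"
      by (rule sum.Sigma) (auto simp: words_finite finite_pre)
    thus ?thesis unfolding Qk_Sigma[OF kl] e by simp
  qed
  also have "\<dots> = (\<Sum>w\<in>words k. \<Sum>x\<in>{x\<in>words l. take k x = w}. \<Sum>y\<in>pre l (take k x). ?F x y)"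
    by (rule sum.group[symmetric]) (use words_finite kl in \<open>auto simp: words_def\<close>)
  also have "\<dots> = (\<Sum>w\<in>words k. \<Sum>x\<in>pre l w. \<Sum>y\<in>pre l w. ?F x y)"
  proof (rule sum.cong[OF refl])
    fix w assume "w \<in> words k"
    hence lw: "length w = k" by (simp add: words_def)
    have e1: "{x\<in>words l. take k x = w} = pre l w" using lw unfolding pre_def by simp
    have e2: "\<forall>x\<in>pre l w. take k x = w" using lw unfolding pre_def by simp
    show "(\<Sum>x\<in>{x\<in>words l. take k x = w}. \<Sum>y\<in>pre l (take k x). ?F x y) = (\<Sum>x\<in>pre l w. \<Sum>y\<in>pre l w. ?F x y)"
      unfolding e1 by (rule sum.cong[OF refl]) (simp add: e2)
  qed
  also have "\<dots> \<ge> 0"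
  proof (rule sum_nonneg)
    fix w assume "w \<in> words k"
    show "0 \<le> (\<Sum>x\<in>pre l w. \<Sum>y\<in>pre l w. ?F x y)"
      by (rule delsarte[OF finite_pre]) (use kernel_maps[OF k] in \<open>auto simp: maps_def pre_def words_def\<close>)
  qed
  finally show ?thesis .
qed

lemma Pk_sum:
  assumes k: "is_kernel l g" and kl: "k \<le> l"
  shows "- real (l choose i) * 2 ^ l \<le> (\<Sum>p\<in>Pk l k. kraw l i (hamming (g (fst p)) (g (snd p))))"
proof -
  let ?K = "\<lambda>p. kraw l i (hamming (g (fst p)) (g (snd p)))"
  have "(\<Sum>p\<in>Qk l k. ?K p) = (\<Sum>p\<in>Pk l k. ?K p) + (\<Sum>p\<in>diag l. ?K p)"
    unfolding Pk_eq using sum.subset_diff[OF diag_sub finite_Qk] by simp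
  moreover have "(\<Sum>p\<in>diag l. ?K p) = real (l choose i) * 2 ^ l"
    unfolding diag_def by (subst sum.reindex) (auto simp: inj_on_def hamming_self kraw0 card_words)
  ultimately show ?thesis using Qk_nonneg[OF k kl, of i] by simp
qed

lemma LP_valid_kernel:
  assumes k: "is_kernel l g" and mo: "monoD l (partial_dist l g)"
  shows "(\<exists>B :: nat \<Rightarrow> nat \<Rightarrow> real.
        (\<forall>k<l. \<forall>i. partial_dist l g k \<le> i \<and> i \<le> l \<longrightarrow> 0 \<le> B k i) \<and>
        (\<forall>r\<in>{1..l}. (\<Sum>i=partial_dist l g (l - r)..l. B (l - r) i) = 2 ^ r - 1) \<and>
        (\<forall>r\<in>{1..l-1}. \<forall>i. partial_dist l g (l - r + 1) \<le> i \<and> i \<le> l \<longrightarrow> B (l - r) i \<ge> B (l - r + 1) i) \<and>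
        (\<forall>r\<in>{1..l}. \<forall>i\<le>l.
            (\<Sum>j=partial_dist l g (l - r)..l. B (l - r) j * kraw l i j) \<ge> - real (l choose i)))"
proof (intro exI[of _ "Bk l g"] conjI)
  show "\<forall>k<l. \<forall>i. partial_dist l g k \<le> i \<and> i \<le> l \<longrightarrow> 0 \<le> Bk l g k i"
    unfolding Bk_def by simp
  show "\<forall>r\<in>{1..l}. (\<Sum>i=partial_dist l g (l - r)..l. Bk l g (l - r) i) = 2 ^ r - 1"
  proof
    fix r assume r: "r \<in> {1..l}"
    hence kl: "l - r < l" and lr: "l - (l - r) = r" by auto
    have "(\<Sum>i=partial_dist l g (l - r)..l. Bk l g (l - r) i) = (\<Sum>i=partial_dist l g (l - r)..l. Bk l g (l - r) i * 1)" by simp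
    also have "\<dots> = real (card (Pk l (l - r))) / 2 ^ l"
      using group_Pk[OF k mo kl, of "\<lambda>_. 1"] by simp
    also have "\<dots> = (2 ^ l * 2 ^ r - 2 ^ l) / 2 ^ l"
      using card_Pk[of "l - r" l] lr by (simp add: of_nat_diff)
    also have "\<dots> = 2 ^ r - 1" by (simp add: field_simps)
    finally show "(\<Sum>i=partial_dist l g (l - r)..l. Bk l g (l - r) i) = 2 ^ r - 1" .
  qed
  show "\<forall>r\<in>{1..l-1}. \<forall>i. partial_dist l g (l - r + 1) \<le> i \<and> i \<le> l \<longrightarrow> Bk l g (l - r) i \<ge> Bk l g (l - r + 1) i"
  proof (intro ballI allI impI)
    fix r i assume "r \<in> {1..l-1}"
    have "{p \<in> Pk l (Suc (l - r)). hamming (g (fst p)) (g (snd p)) = i} \<subseteq> {p \<in> Pk l (l - r). hamming (g (fst p)) (g (snd p)) = i}"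
      using Pk_mono by blast
    hence "card {p \<in> Pk l (Suc (l - r)). hamming (g (fst p)) (g (snd p)) = i} \<le> card {p \<in> Pk l (l - r). hamming (g (fst p)) (g (snd p)) = i}"
      by (rule card_mono[rotated]) (use finite_Pk in auto)
    thus "Bk l g (l - r) i \<ge> Bk l g (l - r + 1) i" unfolding Bk_def by (simp add: divide_right_mono)
  qed
  show "\<forall>r\<in>{1..l}. \<forall>i\<le>l. (\<Sum>j=partial_dist l g (l - r)..l. Bk l g (l - r) j * kraw l i j) \<ge> - real (l choose i)"
  proof (intro ballI allI impI)
    fix r i assume r: "r \<in> {1..l}" and i: "i \<le> l"
    hence kl: "l - r < l" by auto
    have "(\<Sum>j=partial_dist l g (l - r)..l. Bk l g (l - r) j * kraw l i j)
        = (\<Sum>p\<in>Pk l (l - r). kraw l i (hamming (g (fst p)) (g (snd p)))) / 2 ^ l"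
      by (rule group_Pk[OF k mo kl])
    also have "\<dots> \<ge> (- real (l choose i) * 2 ^ l) / 2 ^ l"
      by (rule divide_right_mono[OF Pk_sum[OF k]]) auto
    finally show "(\<Sum>j=partial_dist l g (l - r)..l. Bk l g (l - r) j * kraw l i j) \<ge> - real (l choose i)" by simp
  qed
qed

declare of_nat_prod[simp del]

lemma min_dist_fin: "C \<subseteq> words n \<Longrightarrow> finite {hamming x y | x y. x \<in> C \<and> y \<in> C \<and> x \<noteq> y}"
proof -
  assume C: "C \<subseteq> words n"
  have "{hamming x y | x y. x \<in> C \<and> y \<in> C \<and> x \<noteq> y} \<subseteq> {..n}"
    using C hamming_le unfolding words_def by fastforce
  thus ?thesis using finite_subset by blast
qed

lemma best_dist_fin: "finite {min_dist C | C. C \<subseteq> words n \<and> card C = 2 ^ k}"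
proof -
  have "{min_dist C | C. C \<subseteq> words n \<and> card C = 2 ^ k} \<subseteq> min_dist ` Pow (words n)" by auto
  thus ?thesis using words_finite finite_subset by blast
qed

lemma best_dist_ge:
  assumes k: "is_kernel l g" and mo: "monoD l (partial_dist l g)" and i: "i < l"
  shows "partial_dist l g i \<le> best_dist l (l - i)"
proof -
  have m: "maps l g" using kernel_maps[OF k] .
  let ?P = "pre l (replicate i False)"
  let ?C = "g ` ?P"
  have Pw: "?P \<subseteq> words l" unfolding pre_def by auto
  have Cw: "?C \<subseteq> words l" using m Pw unfolding maps_def by auto
  have inj: "inj_on g ?P" using kernel_inj[OF k] Pw inj_on_subset by blast
  have cC: "card ?C = 2 ^ (l - i)" using card_image[OF inj] card_pre[of "replicate i False" l] i by simp
  let ?M = "{hamming x y | x y. x \<in> ?C \<and> y \<in> ?C \<and> x \<noteq> y}"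
  define a0 where "a0 = replicate l False"
  define b0 where "b0 = replicate i False @ True # replicate (l - i - 1) False"
  have a0: "a0 \<in> ?P" unfolding a0_def pre_def words_def using i by (simp add: min_def)
  have b0: "b0 \<in> ?P" unfolding b0_def pre_def words_def using i by simp
  have "a0 \<noteq> b0"
  proof
    assume "a0 = b0"
    hence "a0 ! i = b0 ! i" by simp
    thus False unfolding a0_def b0_def using i by (simp add: nth_append)
  qed
  hence "g a0 \<noteq> g b0" using inj a0 b0 by (meson inj_on_def)
  hence Mne: "?M \<noteq> {}" using a0 b0 by blast
  have "partial_dist l g i \<le> min_dist ?C"
    unfolding min_dist_def Min_ge_iff[OF min_dist_fin[OF Cw] Mne]
  proof
    fix z assume "z \<in> ?M"
    then obtain a b where ab: "a \<in> ?P" "b \<in> ?P" "z = hamming (g a) (g b)" "g a \<noteq> g b" by blast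
    have "a \<noteq> b" using ab by blast
    have la: "length a = l" "length b = l" using ab Pw unfolding words_def by auto
    have ta: "take i a = replicate i False" "take i b = replicate i False" using ab unfolding pre_def by auto
    have "\<forall>m<i. a ! m = b ! m"
    proof (intro allI impI)
      fix m assume "m < i"
      hence "take i a ! m = a ! m" "take i b ! m = b ! m" by simp_all
      thus "a ! m = b ! m" using ta by simp
    qed
    from pd_le_prefix[OF m mo i _ _ this \<open>a \<noteq> b\<close>] ab Pw
    show "partial_dist l g i \<le> z" by auto
  qed
  also have "\<dots> \<le> best_dist l (l - i)"
    unfolding best_dist_def by (rule Max_ge[OF best_dist_fin]) (use Cw cC in blast)
  finally show ?thesis .
qed

lemma best_dist_le:
  assumes k: "1 \<le> k" "k \<le> n"
  shows "best_dist n k \<le> n"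
proof -
  let ?S = "{min_dist C | C. C \<subseteq> words n \<and> card C = 2 ^ k}"
  have "pre n (replicate (n - k) False) \<subseteq> words n" unfolding pre_def by auto
  moreover have "card (pre n (replicate (n - k) False)) = 2 ^ k" using card_pre[of "replicate (n - k) False" n] k by simp
  ultimately have ne: "?S \<noteq> {}" by blast
  obtain C where C: "C \<subseteq> words n" "card C = 2 ^ k" "best_dist n k = min_dist C"
    using Max_in[OF best_dist_fin ne] unfolding best_dist_def by auto
  have fC: "finite C" using C words_finite finite_subset by blast
  have "\<not> card C \<le> Suc 0"
  proof -
    have "(2::nat) ^ 1 \<le> 2 ^ k" using k by (intro power_increasing) auto
    thus ?thesis using C by simp
  qed
  then obtain x y where xy: "x \<in> C" "y \<in> C" "x \<noteq> y" using card_le_Suc0_iff_eq[OF fC] by blast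
  have "min_dist C \<le> hamming x y"
    unfolding min_dist_def by (rule Min_le[OF min_dist_fin[OF C(1)]]) (use xy in blast)
  also have "\<dots> \<le> n" using hamming_le[of x y] xy C unfolding words_def by auto
  finally show ?thesis using C by simp
qed

lemma log_sum_prod:
  fixes f :: "nat \<Rightarrow> nat"
  assumes "finite A" "\<forall>j\<in>A. 0 < f j"
  shows "(\<Sum>j\<in>A. log b (real (f j))) = log b (real (\<Prod>j\<in>A. f j))"
  using assms
proof (induction A rule: finite_induct)
  case empty thus ?case by simp
next
  case (insert x F)
  have p: "0 < (\<Prod>j\<in>F. f j)" using insert by (intro prod_pos) auto
  have "log b (real (\<Prod>j\<in>insert x F. f j)) = log b (real (f x) * real (\<Prod>j\<in>F. f j))"
    using insert by simp
  also have "\<dots> = log b (real (f x)) + log b (real (\<Prod>j\<in>F. f j))"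
    by (rule log_mult_pos) (use p insert in simp_all)
  finally show ?case using insert by simp
qed

lemma val_image:
  fixes l :: nat and D :: "nat \<Rightarrow> nat"
  assumes "\<forall>j<l. 0 < D j" "\<forall>j<l. D j \<le> l"
  shows "(1 / real l) * (\<Sum>j<l. log (real l) (real (D j))) \<in> (\<lambda>n. (1 / real l) * log (real l) (real n)) ` {..l ^ l}"
proof -
  have "(\<Sum>j<l. log (real l) (real (D j))) = log (real l) (real (\<Prod>j<l. D j))"
    using log_sum_prod[of "{..<l}" D] assms by simp
  moreover have "(\<Prod>j<l. D j) \<le> (\<Prod>j<l. l)" by (rule prod_mono) (use assms in auto)
  ultimately show ?thesis by (intro image_eqI[where x="\<Prod>j<l. D j"]) auto
qed

theorem proposition4:
  fixes l :: nat
  assumes "l \<ge> 2"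
  shows "E_max l \<le> Max {seq_value l D | D. LP_valid l D \<and> (\<forall>i<l. 0 < D i)}"
proof -
  obtain g where g: "is_kernel l g" and best: "\<forall>h. is_kernel l h \<longrightarrow> Psi l h \<le> Psi l g"
    using best_exists by blast
  have m: "maps l g" using kernel_maps[OF g] .
  have mo: "monoD l (partial_dist l g)"
    by (rule adj_mono) (use best_adj[OF g best] in blast)
  let ?D = "partial_dist l g"
  have pos: "\<forall>i<l. 0 < ?D i" using pd_pos[OF g] by blast
  have A1: "\<forall>i j. i \<le> j \<and> j < l \<longrightarrow> ?D i \<le> ?D j" using mo unfolding monoD_def .
  have A2: "\<forall>i<l. ?D i \<le> best_dist l (l - i)" using best_dist_ge[OF g mo] by blast
  have LP: "LP_valid l ?D"
    unfolding LP_valid_def by (intro conjI A1 A2 LP_valid_kernel[OF g mo])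
  let ?S = "{seq_value l D | D. LP_valid l D \<and> (\<forall>i<l. 0 < D i)}"
  let ?img = "(\<lambda>n. (1 / real l) * log (real l) (real n)) ` {..l ^ l}"
  have finS: "finite ?S"
  proof (rule finite_subset[of _ ?img])
    show "?S \<subseteq> ?img"
    proof
      fix z assume "z \<in> ?S"
      then obtain D where D: "z = seq_value l D" "LP_valid l D" "\<forall>i<l. 0 < D i" by blast
      have "\<forall>j<l. D j \<le> l"
      proof (intro allI impI)
        fix j assume j: "j < l"
        hence "D j \<le> best_dist l (l - j)" using D(2) unfolding LP_valid_def by blast
        also have "\<dots> \<le> l" using j by (intro best_dist_le) auto
        finally show "D j \<le> l" .
      qed
      thus "z \<in> ?img" using val_image[OF D(3)] D(1) unfolding seq_value_def by blast
    qed
  qed simp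
  let ?K = "{kernel_exponent l h | h. is_kernel l h}"
  have finK: "finite ?K"
  proof (rule finite_subset[of _ ?img])
    show "?K \<subseteq> ?img"
    proof
      fix z assume "z \<in> ?K"
      then obtain h where h: "z = kernel_exponent l h" "is_kernel l h" by blast
      have "\<forall>j<l. partial_dist l h j \<le> l" using pd_le_l[OF kernel_maps[OF h(2)]] by blast
      thus "z \<in> ?img" using val_image[of l "partial_dist l h"] pd_pos[OF h(2)] h(1)
        unfolding kernel_exponent_def by blast
    qed
  qed simp
  have neK: "?K \<noteq> {}" using kernel_id by blast
  obtain h where h: "is_kernel l h" "E_max l = kernel_exponent l h"
    using Max_in[OF finK neK] unfolding E_max_def by auto
  have mh: "maps l h" using kernel_maps[OF h(1)] .
  have PP: "Pi_pd l h \<le> Pi_pd l g"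
  proof (rule ccontr)
    assume "\<not> ?thesis"
    hence "Pi_pd l g + 1 \<le> Pi_pd l h" by simp
    hence "(l*l*l+1) * (Pi_pd l g + 1) \<le> (l*l*l+1) * Pi_pd l h" by (rule mult_left_mono) simp
    hence "Psi l g < Psi l h" unfolding Psi_def using Sg_bound[OF m] by (simp add: algebra_simps)
    thus False using best h(1) by (meson not_le)
  qed
  have ke: "\<And>f. is_kernel l f \<Longrightarrow> kernel_exponent l f = (1 / real l) * log (real l) (real (Pi_pd l f))"
    unfolding kernel_exponent_def Pi_pd_def using log_sum_prod pd_pos by (metis finite_lessThan lessThan_iff)
  have Ppos: "0 < Pi_pd l h" unfolding Pi_pd_def using pd_pos[OF h(1)] by (intro prod_pos) auto
  have "E_max l = (1 / real l) * log (real l) (real (Pi_pd l h))" using h ke by simp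
  also have "\<dots> \<le> (1 / real l) * log (real l) (real (Pi_pd l g))"
    using PP Ppos assms by (intro mult_left_mono log_le_cancel_iff[THEN iffD2]) auto
  also have "\<dots> = seq_value l ?D" using ke[OF g] unfolding seq_value_def kernel_exponent_def by auto
  also have "\<dots> \<le> Max ?S" by (rule Max_ge[OF finS]) (use LP pos in blast)
  finally show ?thesis .
qed

end
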